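(* For positive integers $p,q$ and an integer $k\ge0$, $$G_{k+3}(p-1,q)+(-1)^kG_{k+3}(q-1,p)=\sum_{a+b=k}(-1)^b\,\zeta(\{1\}^{p-1},a+2)\,\zeta(\{1\}^{q-1},b+2),$$ where the sum is over nonnegative integers $a,b$ with $a+b=k$.
   Context: $\zeta(\alpha_1,\ldots,\alpha_r)=\sum_{1\le k_1<\cdots<k_r}k_1^{-\alpha_1}\cdots k_r^{-\alpha_r}$ for positive integers $\alpha_i$, $\alpha_r\ge2$; $\{a\}^k$ denotes $k$ repetitions of $a$. For nonnegative integers $n,p,q$, $$G_{n+2}(p,q)=\sum_{1\le k_1<\cdots<k_{p+1}}\frac{1}{k_1\cdots k_p\,k_{p+1}^{n+2}}\sum_{1\le \ell_1\le\cdots\le\ell_q\le k_{p+1}}\frac{1}{\ell_1\cdots\ell_q}.$$ *)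

theory Defs
  imports "HOL-Analysis.Analysis"
begin

definition incr_tuples :: "nat \<Rightarrow> nat list set" where
  "incr_tuples r = {ks. length ks = r \<and> sorted_wrt (<) ks \<and> (\<forall>k\<in>set ks. 1 \<le> k)}"

definition mzv :: "nat list \<Rightarrow> real" where
  "mzv alpha = (\<Sum>\<^sub>\<infinity>ks\<in>incr_tuples (length alpha).
      (\<Prod>i<length alpha. 1 / real (ks ! i) ^ (alpha ! i)))"

text \<open>G_s(p,q) (the paper writes s = n+2):
  sum over 1 <= k_1 < ... < k_(p+1) and 1 <= l_1 <= ... <= l_q <= k_(p+1) of
  1/(k_1 ... k_p * k_(p+1)^s * l_1 ... l_q).\<close>

definition G_index :: "nat \<Rightarrow> nat \<Rightarrow> (nat list \<times> nat list) set" where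
  "G_index p q = {(ks, ls). ks \<in> incr_tuples (Suc p) \<and> length ls = q \<and> sorted ls
      \<and> (\<forall>l\<in>set ls. 1 \<le> l \<and> l \<le> last ks)}"

definition G :: "nat \<Rightarrow> nat \<Rightarrow> nat \<Rightarrow> real" where
  "G s p q = (\<Sum>\<^sub>\<infinity>(ks, ls)\<in>G_index p q.
      1 / ((\<Prod>i<p. real (ks ! i)) * real (ks ! p) ^ s * (\<Prod>j<q. real (ls ! j))))"

end

theory Submission
  imports Defs
begin


lemma hs_Sigma:
  fixes f :: "'a \<times> 'b \<Rightarrow> real"
  assumes nn: "\<And>x y. x\<in>A \<Longrightarrow> y\<in>B x \<Longrightarrow> f (x,y) \<ge> 0"
    and fib: "\<And>x. x\<in>A \<Longrightarrow> ((\<lambda>y. f (x,y)) has_sum g x) (B x)"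
    and tot: "(g has_sum t) A"
  shows "(f has_sum t) (Sigma A B)"
proof -
  have gs: "g summable_on A" using tot by (auto simp: summable_on_def)
  have "f summable_on Sigma A B" by (rule summable_on_SigmaI[where g=g]) (use fib nn gs in auto)
  then show ?thesis using has_sum_SigmaI[OF fib tot] by blast
qed

lemma hs_fiber:
  fixes f :: "'a \<Rightarrow> real"
  assumes nn: "\<And>x. x\<in>S \<Longrightarrow> f x \<ge> 0" and gT: "\<And>x. x\<in>S \<Longrightarrow> g x \<in> T"
    and fib: "\<And>y. y\<in>T \<Longrightarrow> (f has_sum s y) {x\<in>S. g x = y}" and tot: "(s has_sum t) T"
  shows "(f has_sum t) S"
proof -
  have 1: "((\<lambda>(y,x). f x) has_sum t) (Sigma T (\<lambda>y. {x\<in>S. g x = y}))"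
    by (rule hs_Sigma) (use nn fib tot in auto)
  have 2: "bij_betw snd (Sigma T (\<lambda>y. {x\<in>S. g x = y})) S"
    by (rule bij_betwI[where g="\<lambda>x. (g x, x)"]) (use gT in auto)
  have "((\<lambda>x. f (snd x)) has_sum t) (Sigma T (\<lambda>y. {x\<in>S. g x = y}))"
    using 1 by (simp add: case_prod_unfold)
  then show ?thesis using has_sum_reindex_bij_betw[OF 2, of f t] by simp
qed

lemma has_sum_sum_fun:
  fixes f :: "'i \<Rightarrow> 'a \<Rightarrow> real"
  assumes "finite I" "\<And>i. i\<in>I \<Longrightarrow> (f i has_sum s i) A"
  shows "((\<lambda>x. \<Sum>i\<in>I. f i x) has_sum (\<Sum>i\<in>I. s i)) A"
  using assms by (induction I rule: finite_induct) (auto intro!: has_sum_add)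

fun ee :: "nat \<Rightarrow> nat \<Rightarrow> real" where
  "ee 0 n = 1"
| "ee (Suc r) n = (\<Sum>i\<in>{1..<n}. ee r i / real i)"

fun hh :: "nat \<Rightarrow> nat \<Rightarrow> real" where
  "hh 0 n = 1"
| "hh (Suc q) n = (\<Sum>l\<in>{1..n}. hh q l / real l)"

definition PP :: "nat list \<Rightarrow> real" where
  "PP xs = (\<Prod>i<length xs. 1 / real (xs ! i))"

definition IT :: "nat \<Rightarrow> nat \<Rightarrow> nat list set" where
  "IT r n = {xs \<in> incr_tuples r. \<forall>x\<in>set xs. x < n}"

definition SL :: "nat \<Rightarrow> nat \<Rightarrow> nat list set" where
  "SL q n = {ls. length ls = q \<and> sorted ls \<and> (\<forall>l\<in>set ls. 1 \<le> l \<and> l \<le> n)}"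

lemma PP_nonneg: "PP xs \<ge> 0"
  unfolding PP_def by (auto intro!: prod_nonneg)

lemma PP_snoc: "PP (xs @ [n]) = PP xs / real n"
  unfolding PP_def by (simp add: nth_append)

lemma IT_finite: "finite (IT r n)"
proof -
  have "IT r n \<subseteq> {xs. set xs \<subseteq> {..<n} \<and> length xs = r}"
    by (auto simp: IT_def incr_tuples_def)
  then show ?thesis by (rule finite_subset) (rule finite_lists_length_eq, simp)
qed

lemma SL_finite: "finite (SL q n)"
proof -
  have "SL q n \<subseteq> {xs. set xs \<subseteq> {..n} \<and> length xs = q}"
    by (auto simp: SL_def)
  then show ?thesis by (rule finite_subset) (rule finite_lists_length_eq, simp)
qed

lemma incr_snoc: "ys @ [i] \<in> incr_tuples (Suc r) \<longleftrightarrow> ys \<in> incr_tuples r \<and> (\<forall>x\<in>set ys. x < i) \<and> 1 \<le> i"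
  by (auto simp: incr_tuples_def sorted_wrt_append)

lemma incr_decomp: "xs \<in> incr_tuples (Suc r) \<Longrightarrow> xs = butlast xs @ [last xs]"
  by (rule append_butlast_last_id[symmetric]) (auto simp: incr_tuples_def)

lemma incr_fiber:
  assumes "1 \<le> i"
  shows "{xs \<in> incr_tuples (Suc r). last xs = i} = (\<lambda>ys. ys @ [i]) ` IT r i"
proof
  show "{xs \<in> incr_tuples (Suc r). last xs = i} \<subseteq> (\<lambda>ys. ys @ [i]) ` IT r i"
  proof
    fix xs assume "xs \<in> {xs \<in> incr_tuples (Suc r). last xs = i}"
    then have xs: "xs \<in> incr_tuples (Suc r)" "last xs = i" by auto
    then have e: "xs = butlast xs @ [i]" using incr_decomp by metis
    then have "butlast xs @ [i] \<in> incr_tuples (Suc r)" using xs by simp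
    then have "butlast xs \<in> IT r i" unfolding incr_snoc IT_def by auto
    then show "xs \<in> (\<lambda>ys. ys @ [i]) ` IT r i" using e by blast
  qed
  show "(\<lambda>ys. ys @ [i]) ` IT r i \<subseteq> {xs \<in> incr_tuples (Suc r). last xs = i}"
    using assms by (auto simp: IT_def incr_snoc)
qed

lemma IT_fiber:
  assumes "i \<in> {1..<n}"
  shows "{xs \<in> IT (Suc r) n. last xs = i} = (\<lambda>ys. ys @ [i]) ` IT r i"
proof -
  have "{xs \<in> IT (Suc r) n. last xs = i} = {xs \<in> incr_tuples (Suc r). last xs = i}"
  proof (safe)
    fix xs assume xs: "xs \<in> incr_tuples (Suc r)" "i = last xs"
    then have e: "xs = butlast xs @ [last xs]" using incr_decomp by metis
    have "\<forall>x\<in>set (butlast xs). x < last xs" using xs(1) e incr_snoc by metis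
    have "\<forall>x\<in>set xs. x < n"
    proof
      fix x assume "x \<in> set xs"
      then have "x \<in> set (butlast xs @ [last xs])" using e by simp
      then have "x \<in> set (butlast xs) \<or> x = last xs" by auto
      then show "x < n" using \<open>\<forall>x\<in>set (butlast xs). x < last xs\<close> xs(2) assms by auto
    qed
    then show "xs \<in> IT (Suc r) n" using xs(1) unfolding IT_def by simp
  qed (auto simp: IT_def)
  then show ?thesis using incr_fiber assms by simp
qed

lemma ee_has_sum: "(PP has_sum ee r n) (IT r n)"
proof (induction r arbitrary: n)
  case 0
  have "IT 0 n = {[]}" by (auto simp: IT_def incr_tuples_def)
  moreover have "PP [] = 1" by (simp add: PP_def)
  ultimately show ?case using has_sum_finite[of "{[]}" PP] by simp
next
  case (Suc r)
  show ?case
  proof (rule hs_fiber[where g=last and T="{1..<n}" and s="\<lambda>i. ee r i / real i"])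
    fix xs assume "xs \<in> IT (Suc r) n"
    then have xs: "xs \<in> incr_tuples (Suc r)" "\<forall>x\<in>set xs. x < n" by (auto simp: IT_def)
    have "xs \<noteq> []" using xs by (auto simp: incr_tuples_def)
    then have "last xs \<in> set xs" by simp
    then show "last xs \<in> {1..<n}" using xs by (auto simp: incr_tuples_def)
  next
    fix i assume i: "i \<in> {1..<n}"
    have inj: "inj_on (\<lambda>ys. ys @ [i]) (IT r i)" by (auto simp: inj_on_def)
    have "((\<lambda>ys. PP ys / real i) has_sum ee r i / real i) (IT r i)"
      using has_sum_cmult_left[OF Suc.IH, of "1 / real i"] by simp
    then have "(PP has_sum ee r i / real i) ((\<lambda>ys. ys @ [i]) ` IT r i)"
      using has_sum_reindex[OF inj, of PP] by (simp add: o_def PP_snoc)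
    then show "(PP has_sum ee r i / real i) {x \<in> IT (Suc r) n. last x = i}"
      using IT_fiber[OF i] by simp
  qed (auto simp: PP_nonneg)
qed

lemma SL_fiber:
  assumes "l \<in> {1..n}"
  shows "{xs \<in> SL (Suc q) n. last xs = l} = (\<lambda>ys. ys @ [l]) ` SL q l"
proof
  show "{xs \<in> SL (Suc q) n. last xs = l} \<subseteq> (\<lambda>ys. ys @ [l]) ` SL q l"
  proof
    fix xs assume "xs \<in> {xs \<in> SL (Suc q) n. last xs = l}"
    then have xs: "xs \<in> SL (Suc q) n" "last xs = l" by auto
    then have "xs \<noteq> []" by (auto simp: SL_def)
    then have e: "xs = butlast xs @ [l]" using xs append_butlast_last_id by metis
    have "butlast xs @ [l] \<in> SL (Suc q) n" using xs e by simp
    then have "butlast xs \<in> SL q l" by (auto simp: SL_def sorted_append)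
    then show "xs \<in> (\<lambda>ys. ys @ [l]) ` SL q l" using e by blast
  qed
  show "(\<lambda>ys. ys @ [l]) ` SL q l \<subseteq> {xs \<in> SL (Suc q) n. last xs = l}"
    using assms by (auto simp: SL_def sorted_append intro: order_trans)
qed

lemma hh_has_sum: "(PP has_sum hh q n) (SL q n)"
proof (induction q arbitrary: n)
  case 0
  have "SL 0 n = {[]}" by (auto simp: SL_def)
  moreover have "PP [] = 1" by (simp add: PP_def)
  ultimately show ?case using has_sum_finite[of "{[]}" PP] by simp
next
  case (Suc q)
  show ?case
  proof (rule hs_fiber[where g=last and T="{1..n}" and s="\<lambda>i. hh q i / real i"])
    fix xs assume xs: "xs \<in> SL (Suc q) n"
    have "xs \<noteq> []" using xs by (auto simp: SL_def)
    then have "last xs \<in> set xs" by simp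
    then show "last xs \<in> {1..n}" using xs by (auto simp: SL_def)
  next
    fix i assume i: "i \<in> {1..n}"
    have inj: "inj_on (\<lambda>ys. ys @ [i]) (SL q i)" by (auto simp: inj_on_def)
    have "((\<lambda>ys. PP ys / real i) has_sum hh q i / real i) (SL q i)"
      using has_sum_cmult_left[OF Suc.IH, of "1 / real i"] by simp
    then have "(PP has_sum hh q i / real i) ((\<lambda>ys. ys @ [i]) ` SL q i)"
      using has_sum_reindex[OF inj, of PP] by (simp add: o_def PP_snoc)
    then show "(PP has_sum hh q i / real i) {x \<in> SL (Suc q) n. last x = i}"
      using SL_fiber[OF i] by simp
  qed (auto simp: PP_nonneg)
qed


lemma ee_nonneg: "ee r n \<ge> 0"
  by (induction r arbitrary: n) (auto intro!: sum_nonneg)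

lemma hh_nonneg: "hh q n \<ge> 0"
  by (induction q arbitrary: n) (auto intro!: sum_nonneg)

lemma tele:
  assumes "l \<ge> 1"
  shows "((\<lambda>m. if i < m then 1 / (real (m+l-1) * real (m+l)) else 0) has_sum 1 / real (i+l)) UNIV"
proof -
  define f where "f j = - 1 / real (i + l + j)" for j
  have "f \<longlonglongrightarrow> 0"
    unfolding f_def by real_asymp
  then have "(\<lambda>j. f (Suc j) - f j) sums (0 - f 0)" by (rule telescope_sums)
  moreover have "f (Suc j) - f j = 1 / (real (i+j+1+l-1) * real (i+j+1+l))" for j
    using assms by (simp add: f_def field_simps)
  ultimately have "(\<lambda>j. 1 / (real (i+j+1+l-1) * real (i+j+1+l))) sums (1 / real (i+l))"
    by (simp add: f_def)
  then have "((\<lambda>j. 1 / (real (i+j+1+l-1) * real (i+j+1+l))) has_sum (1 / real (i+l))) UNIV"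
    by (rule sums_nonneg_imp_has_sum) simp
  also have "?this \<longleftrightarrow> ((\<lambda>m. 1 / (real (m+l-1) * real (m+l))) has_sum (1 / real (i+l))) {i<..}"
    by (rule has_sum_reindex_bij_witness[where i="\<lambda>m. m - i - 1" and j="\<lambda>j. i+j+1"]) auto
  also have "\<dots> \<longleftrightarrow> ?thesis"
    by (rule has_sum_cong_neutral) auto
  finally show ?thesis .
qed

lemma pf0:
  assumes "m \<ge> 1"
  shows "(\<Sum>l\<in>{1..n}. 1 / (real (m+l-1) * real (m+l))) = 1 / real m - 1 / real (m+n)"
  using assms
proof (induction n)
  case 0 then show ?case by simp
next
  case (Suc n)
  have x: "real (m+n) > 0" using Suc.prems by simp
  have e: "- 1 / x + 1 / (x * (x+1)) = - 1 / (x+1)" if "x > 0" for x :: real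
  proof -
    have "1/x - 1/(x+1) = ((x+1) - x) / (x*(x+1))"
      using that by (subst diff_frac_eq) auto
    then show ?thesis by simp
  qed
  have "(\<Sum>l\<in>{1..Suc n}. 1 / (real (m+l-1) * real (m+l))) =
    (1 / real m - 1 / real (m+n)) + 1 / (real (m+n) * (real (m+n) + 1))"
    using Suc by simp
  also have "\<dots> = 1 / real m + (- 1 / real (m+n) + 1 / (real (m+n) * (real (m+n) + 1)))"
    by simp
  also have "\<dots> = 1 / real m - 1 / (real (m+n) + 1)"
    using e[OF x] by simp
  finally show ?case by simp
qed

lemma pf:
  assumes "m \<ge> 1"
  shows "(\<Sum>l\<in>{1..n}. 1 / (real (m+l-1) * real (m+l))) = real n / (real m * real (m+n))"
  using pf0[OF assms, of n] assms by (simp add: field_simps)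

definition FF :: "nat \<Rightarrow> nat \<Rightarrow> nat \<Rightarrow> real" where
  "FF q n m = (if 1 \<le> m then ee q m / (real m * real (m+n)) else 0)"

definition VV :: "nat \<Rightarrow> nat \<Rightarrow> nat \<Rightarrow> real" where
  "VV q l m = (if 1 \<le> m then ee q m / (real (m+l-1) * real (m+l)) else 0)"

lemma V0: "l \<ge> 1 \<Longrightarrow> (VV 0 l has_sum hh 0 l / real l) UNIV"
proof -
  assume l: "l \<ge> 1"
  have "VV 0 l = (\<lambda>m. if 0 < m then 1 / (real (m+l-1) * real (m+l)) else 0)"
    by (simp add: VV_def Suc_le_eq fun_eq_iff)
  then show ?thesis using tele[OF l, of 0] by simp
qed

lemma V_F:
  assumes V: "\<And>l. l \<ge> 1 \<Longrightarrow> (VV q l has_sum hh q l / real l) UNIV" and n: "n \<ge> 1"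
  shows "(FF q n has_sum hh (Suc q) n / real n) UNIV"
proof -
  have "((\<lambda>m. \<Sum>l\<in>{1..n}. VV q l m) has_sum (\<Sum>l\<in>{1..n}. hh q l / real l)) UNIV"
    by (rule has_sum_sum_fun) (use V in auto)
  then have "((\<lambda>m. (1 / real n) * (\<Sum>l\<in>{1..n}. VV q l m)) has_sum
      (1 / real n) * (\<Sum>l\<in>{1..n}. hh q l / real l)) UNIV"
    by (rule has_sum_cmult_right)
  moreover have "(1 / real n) * (\<Sum>l\<in>{1..n}. VV q l m) = FF q n m" for m
  proof (cases "m \<ge> 1")
    case True
    have "(\<Sum>l\<in>{1..n}. VV q l m) = ee q m * (\<Sum>l\<in>{1..n}. 1 / (real (m+l-1) * real (m+l)))"
      using True by (simp add: VV_def sum_distrib_left)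
    also have "\<dots> = ee q m * (real n / (real m * real (m+n)))"
      using pf[OF True] by simp
    finally show ?thesis using True n by (simp add: FF_def)
  qed (simp add: FF_def VV_def)
  ultimately show ?thesis by (simp add: sum_divide_distrib)
qed

lemma F_V:
  assumes F: "\<And>n. n \<ge> 1 \<Longrightarrow> (FF q n has_sum hh (Suc q) n / real n) UNIV" and l: "l \<ge> 1"
  shows "(VV (Suc q) l has_sum hh (Suc q) l / real l) UNIV"
proof -
  define f where "f = (\<lambda>(i,m). if 1 \<le> i \<and> i < m then ee q i / real i / (real (m+l-1) * real (m+l)) else (0::real))"
  have fib: "((\<lambda>m. f (i,m)) has_sum FF q l i) UNIV" for i
  proof (cases "i \<ge> 1")
    case True
    have "((\<lambda>m. (ee q i / real i) * (if i < m then 1 / (real (m+l-1) * real (m+l)) else 0))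
        has_sum (ee q i / real i) * (1 / real (i+l))) UNIV"
      by (rule has_sum_cmult_right[OF tele[OF l]])
    moreover have "(ee q i / real i) * (1 / real (i+l)) = FF q l i"
      using True by (simp add: FF_def)
    moreover have "f (i,m) = (ee q i / real i) * (if i < m then 1 / (real (m+l-1) * real (m+l)) else 0)" for m
      using True by (simp add: f_def)
    ultimately show ?thesis by simp
  next
    case False
    then show ?thesis by (simp add: f_def FF_def)
  qed
  have "(f has_sum hh (Suc q) l / real l) (UNIV \<times> UNIV)"
    by (rule hs_Sigma[OF _ fib F[OF l]]) (auto simp: f_def ee_nonneg)
  then have 1: "((\<lambda>(m,i). f (i,m)) has_sum hh (Suc q) l / real l) (UNIV \<times> UNIV)"
    by (subst (asm) has_sum_swap)
  have "((\<lambda>i. f (i,m)) has_sum VV (Suc q) l m) UNIV" for m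
  proof -
    have "((\<lambda>i. f (i,m)) has_sum (\<Sum>i\<in>{1..<m}. f (i,m))) {1..<m}"
      by (rule has_sum_finite) simp
    then have "((\<lambda>i. f (i,m)) has_sum (\<Sum>i\<in>{1..<m}. f (i,m))) UNIV"
      by (rule has_sum_cong_neutral[THEN iffD1, rotated -1]) (auto simp: f_def)
    moreover have "(\<Sum>i\<in>{1..<m}. f (i,m)) = VV (Suc q) l m"
      by (auto simp: f_def VV_def sum_divide_distrib)
    ultimately show ?thesis by simp
  qed
  then show ?thesis
    using has_sum_SigmaD[OF 1[unfolded UNIV_Times_UNIV[symmetric]]] by simp
qed

lemma FF_has_sum: "n \<ge> 1 \<Longrightarrow> (FF q n has_sum hh (Suc q) n / real n) UNIV"
proof (induction q arbitrary: n)
  case 0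
  then show ?case using V_F[OF V0] by blast
next
  case (Suc q)
  then show ?case using V_F[OF F_V[OF Suc.IH]] by blast
qed

lemma last_in_incr: "ks \<in> incr_tuples (Suc r) \<Longrightarrow> 1 \<le> last ks"
proof -
  assume ks: "ks \<in> incr_tuples (Suc r)"
  then have "ks \<noteq> []" by (auto simp: incr_tuples_def)
  then have "last ks \<in> set ks" by simp
  then show ?thesis using ks by (auto simp: incr_tuples_def)
qed

lemma mzv_eq:
  assumes s: "s \<ge> 1" and hs: "((\<lambda>n. ee r n / real n ^ s) has_sum S) UNIV"
  shows "mzv (replicate r 1 @ [s]) = S"
proof -
  define f where "f ks = (\<Prod>i<Suc r. 1 / real (ks ! i) ^ ((replicate r 1 @ [s]) ! i))" for ks
  have fs: "f (ys @ [n]) = PP ys / real n ^ s" if "length ys = r" for ys n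
  proof -
    have "f (ys @ [n]) = (\<Prod>i<r. 1 / real ((ys @ [n]) ! i) ^ ((replicate r 1 @ [s]) ! i)) * (1 / real n ^ s)"
      using that by (simp add: f_def nth_append)
    also have "(\<Prod>i<r. 1 / real ((ys @ [n]) ! i) ^ ((replicate r 1 @ [s]) ! i)) = PP ys"
      unfolding PP_def using that by (intro prod.cong) (auto simp: nth_append)
    finally show ?thesis by simp
  qed
  have "(f has_sum S) (incr_tuples (Suc r))"
  proof (rule hs_fiber[where g=last and T=UNIV and s="\<lambda>n. ee r n / real n ^ s"])
    fix n :: nat
    show "(f has_sum ee r n / real n ^ s) {x \<in> incr_tuples (Suc r). last x = n}"
    proof (cases "n \<ge> 1")
      case True
      have inj: "inj_on (\<lambda>ys. ys @ [n]) (IT r n)" by (auto simp: inj_on_def)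
      have "((\<lambda>ys. PP ys / real n ^ s) has_sum ee r n / real n ^ s) (IT r n)"
        using has_sum_cmult_left[OF ee_has_sum, of "1 / real n ^ s"] by simp
      then have "((\<lambda>ys. f (ys @ [n])) has_sum ee r n / real n ^ s) (IT r n)"
        by (rule has_sum_cong[THEN iffD1, rotated]) (simp add: fs IT_def incr_tuples_def)
      then have "(f has_sum ee r n / real n ^ s) ((\<lambda>ys. ys @ [n]) ` IT r n)"
        using has_sum_reindex[OF inj, of f] by (simp add: o_def)
      then show ?thesis using incr_fiber[OF True] by simp
    next
      case False
      then have "n = 0" by simp
      have e: "{x \<in> incr_tuples (Suc r). last x = 0} = {}"
        using last_in_incr[of _ r] by force
      have z: "ee r 0 / real 0 ^ s = 0" using s by simp
      show ?thesis unfolding \<open>n = 0\<close> e z by simp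
    qed
  next
    fix x show "0 \<le> f x" unfolding f_def by (intro prod_nonneg) simp
  next
    show "((\<lambda>n. ee r n / real n ^ s) has_sum S) UNIV" by (rule hs)
  qed simp
  then show ?thesis unfolding mzv_def f_def by (simp add: infsumI)
qed

lemma G_eq:
  assumes s: "s \<ge> 1" and hs: "((\<lambda>n. ee r n * hh q n / real n ^ s) has_sum S) UNIV"
  shows "G s r q = S"
proof -
  define f where "f = (\<lambda>(ks, ls). 1 / ((\<Prod>i<r. real (ks ! i)) * real (ks ! r) ^ s * (\<Prod>j<q. real (ls ! j))))"
  have fs: "f (ys @ [n], ls) = PP ys * PP ls / real n ^ s" if "length ys = r" "length ls = q" for ys ls n
  proof -
    have "(\<Prod>i<r. real ((ys @ [n]) ! i)) = (\<Prod>i<r. real (ys ! i))"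
      using that by (intro prod.cong) (auto simp: nth_append)
    moreover have "PP ys = 1 / (\<Prod>i<r. real (ys ! i))" "PP ls = 1 / (\<Prod>j<q. real (ls ! j))"
      unfolding PP_def using that by (simp_all add: prod_dividef)
    ultimately show ?thesis using that by (simp add: f_def nth_append)
  qed
  have "(f has_sum S) (G_index r q)"
  proof (rule hs_fiber[where g="\<lambda>x. last (fst x)" and T=UNIV and s="\<lambda>n. ee r n * hh q n / real n ^ s"])
    fix n :: nat
    show "(f has_sum ee r n * hh q n / real n ^ s) {x \<in> G_index r q. last (fst x) = n}"
    proof (cases "n \<ge> 1")
      case True
      define h where "h = (\<lambda>(ys::nat list, ls::nat list). (ys @ [n], ls))"
      have inj: "inj_on h (IT r n \<times> SL q n)" by (auto simp: inj_on_def h_def)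
      have "((\<lambda>(ys, ls). PP ys * PP ls / real n ^ s) has_sum ee r n * hh q n / real n ^ s) (IT r n \<times> SL q n)"
      proof -
        have A1: "((\<lambda>ys. PP ys * hh q n / real n ^ s) has_sum ee r n * hh q n / real n ^ s) (IT r n)"
          using has_sum_cmult_left[OF ee_has_sum, of "hh q n / real n ^ s"] by simp
        have A2: "((\<lambda>ls. PP ys * PP ls / real n ^ s) has_sum PP ys * hh q n / real n ^ s) (SL q n)" for ys
          using has_sum_cmult_right[OF hh_has_sum, of "PP ys / real n ^ s"] by simp
        show ?thesis
          by (rule hs_Sigma[OF _ _ A1]) (simp_all add: PP_nonneg A2)
      qed
      then have "((\<lambda>x. f (h x)) has_sum ee r n * hh q n / real n ^ s) (IT r n \<times> SL q n)"
        by (rule has_sum_cong[THEN iffD1, rotated]) (auto simp: fs IT_def incr_tuples_def SL_def h_def)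
      then have "(f has_sum ee r n * hh q n / real n ^ s) (h ` (IT r n \<times> SL q n))"
        using has_sum_reindex[OF inj, of f] by (simp add: o_def)
      moreover have "h ` (IT r n \<times> SL q n) = {x \<in> G_index r q. last (fst x) = n}"
      proof (intro equalityI subsetI)
        fix x assume "x \<in> h ` (IT r n \<times> SL q n)"
        then obtain ys ls where x: "x = h (ys, ls)" "ys \<in> IT r n" "ls \<in> SL q n" by auto
        have "ys @ [n] \<in> {xs \<in> incr_tuples (Suc r). last xs = n}"
          using incr_fiber[OF True, of r] x(2) by blast
        then show "x \<in> {x \<in> G_index r q. last (fst x) = n}"
          using x by (auto simp: h_def G_index_def SL_def)
      next
        fix x assume "x \<in> {x \<in> G_index r q. last (fst x) = n}"
        then obtain ks ls where a: "x = (ks, ls)" "(ks, ls) \<in> G_index r q" "n = last ks"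
          by (cases x) auto
        then have "ks \<in> {xs \<in> incr_tuples (Suc r). last xs = n}" by (auto simp: G_index_def)
        then obtain ys where ys: "ys \<in> IT r n" "ks = ys @ [n]" using incr_fiber[OF True, of r] by auto
        have "ls \<in> SL q n" using a by (auto simp: G_index_def SL_def)
        then show "x \<in> h ` (IT r n \<times> SL q n)" using ys a(1) by (auto simp: h_def)
      qed
      ultimately show ?thesis by simp
    next
      case False
      then have "n = 0" by simp
      have e: "{x \<in> G_index r q. last (fst x) = 0} = {}"
        using last_in_incr[of _ r] by (force simp: G_index_def)
      have z: "ee r 0 * hh q 0 / real 0 ^ s = 0" using s by simp
      show ?thesis unfolding \<open>n = 0\<close> e z by simp
    qed
  next
    fix x show "0 \<le> f x" unfolding f_def
      by (auto simp: case_prod_unfold intro!: prod_nonneg mult_nonneg_nonneg)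
  next
    show "((\<lambda>n. ee r n * hh q n / real n ^ s) has_sum S) UNIV" by (rule hs)
  qed simp
  then show ?thesis unfolding G_def f_def by (simp add: infsumI)
qed




lemma canc:
  fixes A B P Q s :: real
  assumes "P \<noteq> 0" "Q \<noteq> 0"
  shows "(A * P) * (B * Q) * (s / (P * Q)) = B * (s * A)"
  using assms by (simp add: field_simps)

lemma gen: "(p1*p2*p3) * (p4::real) = p3 * (p1*p2*p4)" by (simp add: mult_ac)

lemma g2: "P \<noteq> 0 \<Longrightarrow> Q \<noteq> 0 \<Longrightarrow> R \<noteq> 0 \<Longrightarrow> P * (Q * B) * R * (1 / (P * Q * R)) = (B::real)"
  by (simp add: field_simps)

lemma g3: "P \<noteq> 0 \<Longrightarrow> Q \<noteq> 0 \<Longrightarrow> R \<noteq> 0 \<Longrightarrow> (Q * B) * P * R * (c / (P * Q * R)) = c * (B::real)"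
  by (simp add: field_simps)

lemma alg_core:
  fixes x y :: real
  assumes x: "x > 0" and y: "y > 0"
  shows "(\<Sum>a\<le>k. (-1) ^ (k - a) / (x ^ (a+2) * y ^ (k - a + 2))) =
    1 / (x ^ (k+2) * y * (x + y)) + (-1) ^ k / (y ^ (k+2) * x * (x + y))"
proof -
  define M where "M = x ^ (k+2) * y ^ (k+2) * (x + y)"
  have M0: "M > 0" using x y by (simp add: M_def)
  have t: "x ^ (k+2) * y ^ (k+2) * ((-1) ^ (k - a) / (x ^ (a+2) * y ^ (k - a + 2)))
      = y ^ a * (-x) ^ (k - a)" if "a \<le> k" for a
  proof -
    have "x ^ (k+2) = x ^ (k - a) * x ^ (a+2)" using that by (simp flip: power_add)
    moreover have "y ^ (k+2) = y ^ a * y ^ (k - a + 2)" using that by (simp flip: power_add)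
    ultimately have "x ^ (k+2) * y ^ (k+2) * ((-1) ^ (k - a) / (x ^ (a+2) * y ^ (k - a + 2)))
      = (x ^ (k - a) * x ^ (a+2)) * (y ^ a * y ^ (k - a + 2)) * ((-1) ^ (k - a) / (x ^ (a+2) * y ^ (k - a + 2)))"
      by (simp only:)
    also have "\<dots> = y ^ a * ((-1) ^ (k - a) * x ^ (k - a))"
      by (rule canc) (use x y in auto)
    finally show ?thesis by (simp add: power_minus[of x])
  qed
  have "M * (\<Sum>a\<le>k. (-1) ^ (k - a) / (x ^ (a+2) * y ^ (k - a + 2)))
      = (x + y) * (\<Sum>a\<le>k. x ^ (k+2) * y ^ (k+2) * ((-1) ^ (k - a) / (x ^ (a+2) * y ^ (k - a + 2))))"
    unfolding M_def gen sum_distrib_left ..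
  also have "\<dots> = (y - (-x)) * (\<Sum>a<Suc k. y ^ a * (-x) ^ (k - a))"
    using t by (simp add: lessThan_Suc_atMost)
  also have "\<dots> = y ^ Suc k - (-x) ^ Suc k"
    by (rule diff_power_eq_sum[symmetric])
  also have "\<dots> = M * (1 / (x ^ (k+2) * y * (x + y)) + (-1) ^ k / (y ^ (k+2) * x * (x + y)))"
  proof -
    have px: "x ^ (k+2) = x * x ^ Suc k" and py: "y ^ (k+2) = y * y ^ Suc k" by simp_all
    have h1: "M * (1 / (x ^ (k+2) * y * (x + y))) = y ^ Suc k"
      unfolding M_def py using x y by (intro g2) auto
    have h2: "M * ((-1) ^ k / (y ^ (k+2) * x * (x + y))) = (-1) ^ k * x ^ Suc k"
      unfolding M_def px using x y by (intro g3) auto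
    have h3: "(-x) ^ Suc k = - ((-1) ^ k * x ^ Suc k)" by (simp add: power_minus[of x])
    have "M * (1 / (x ^ (k+2) * y * (x + y)) + (-1) ^ k / (y ^ (k+2) * x * (x + y)))
        = y ^ Suc k + (-1) ^ k * x ^ Suc k"
      by (simp only: distrib_left[of M] h1 h2)
    then show ?thesis by (simp only: h3)
  qed
  finally show ?thesis using M0 by simp
qed


lemma alg_pt:
  fixes A B :: real and n m :: nat
  shows "(\<Sum>a\<le>k. (-1) ^ (k - a) * (A / real n ^ (a+2) * (B / real m ^ (k - a + 2)))) =
    A * B / (real n ^ (k+2) * real m * real (n+m)) + (-1) ^ k * (B * A / (real m ^ (k+2) * real n * real (m+n)))"
proof (cases "n = 0 \<or> m = 0")
  case True
  then show ?thesis by auto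
next
  case False
  then have x: "real n > 0" and y: "real m > 0" by auto
  have "(\<Sum>a\<le>k. (-1) ^ (k - a) * (A / real n ^ (a+2) * (B / real m ^ (k - a + 2)))) =
      (A * B) * (\<Sum>a\<le>k. (-1) ^ (k - a) / (real n ^ (a+2) * real m ^ (k - a + 2)))"
    unfolding sum_distrib_left by (rule sum.cong) auto
  also have "\<dots> = (A * B) * (1 / (real n ^ (k+2) * real m * (real n + real m)) +
      (-1) ^ k / (real m ^ (k+2) * real n * (real n + real m)))"
    by (simp only: alg_core[OF x y])
  also have "\<dots> = A * B / (real n ^ (k+2) * real m * real (n+m)) + (-1) ^ k * (B * A / (real m ^ (k+2) * real n * real (m+n)))"
    by (simp add: algebra_simps)
  finally show ?thesis .
qed

definition Z :: "nat \<Rightarrow> nat \<Rightarrow> real" where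
  "Z r s = (\<Sum>\<^sub>\<infinity>n. ee r n / real n ^ s)"

lemma dv2: "c / (a / 2) = 2 * (c / (a::real))" by (simp add: field_simps)

lemma ee_summ:
  assumes s: "s \<ge> 2"
  shows "(\<lambda>n. ee r n / real n ^ s) summable_on UNIV"
proof (rule summable_on_comparison_test)
  have "FF r 1 summable_on UNIV" using FF_has_sum[of 1 r] by (auto simp: summable_on_def)
  then show "(\<lambda>n. 2 * FF r 1 n) summable_on UNIV" by (rule summable_on_cmult_right)
next
  fix n :: nat
  show "0 \<le> ee r n / real n ^ s" using ee_nonneg by simp
  show "ee r n / real n ^ s \<le> 2 * FF r 1 n"
  proof (cases "n = 0")
    case True
    then show ?thesis using s by (simp add: FF_def power_0_left)
  next
    case False
    then have n: "real n \<ge> 1" by simp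
    have "real n * (real n + 1) / 2 \<le> real n * real n" using n by simp
    also have "\<dots> = real n ^ 2" by (simp add: power2_eq_square)
    also have "\<dots> \<le> real n ^ s" using n s by (intro power_increasing) auto
    finally have le: "real n * (real n + 1) / 2 \<le> real n ^ s" .
    have "ee r n / real n ^ s \<le> ee r n / (real n * (real n + 1) / 2)"
      by (rule divide_left_mono[OF le ee_nonneg]) (use n in simp)
    also have "\<dots> = 2 * (ee r n / (real n * (real n + 1)))"
      by (rule dv2)
    also have "\<dots> = 2 * FF r 1 n" using False by (simp add: FF_def add.commute)
    finally show ?thesis .
  qed
qed

lemma Z_has: "s \<ge> 2 \<Longrightarrow> ((\<lambda>n. ee r n / real n ^ s) has_sum Z r s) UNIV"
  unfolding Z_def using ee_summ by (simp add: summable_iff_has_sum_infsum[symmetric])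

lemma mzv_Z: "s \<ge> 2 \<Longrightarrow> mzv (replicate r 1 @ [s]) = Z r s"
  by (rule mzv_eq) (auto simp: Z_has)

lemma prod_hs:
  assumes "s1 \<ge> 2" "s2 \<ge> 2"
  shows "((\<lambda>(n,m). ee r n / real n ^ s1 * (ee t m / real m ^ s2)) has_sum Z r s1 * Z t s2) (UNIV \<times> UNIV)"
proof (rule hs_Sigma[where g="\<lambda>n. ee r n / real n ^ s1 * Z t s2"])
  show "((\<lambda>n. ee r n / real n ^ s1 * Z t s2) has_sum Z r s1 * Z t s2) UNIV"
    by (rule has_sum_cmult_left[OF Z_has[OF assms(1)]])
  fix n :: nat
  show "((\<lambda>m. case (n, m) of (n, m) \<Rightarrow> ee r n / real n ^ s1 * (ee t m / real m ^ s2)) has_sum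
      ee r n / real n ^ s1 * Z t s2) UNIV"
    using has_sum_cmult_right[OF Z_has[OF assms(2)], of "ee r n / real n ^ s1"] by simp
qed (simp add: ee_nonneg)

lemma L:
  "((\<lambda>(n,m). ee r n * ee t m / (real n ^ (k+2) * real m * real (n+m))) has_sum G (k+3) r (Suc t)) (UNIV \<times> UNIV)"
proof -
  define f where "f = (\<lambda>(n,m). ee r n * ee t m / (real n ^ (k+2) * real m * real (n+m)))"
  have "(\<lambda>(n,m). ee r n / real n ^ 2 * (ee t m / real m ^ 2)) summable_on (UNIV \<times> UNIV)"
    using prod_hs[of 2 2 r t] by (auto simp: summable_on_def)
  then have fs: "f summable_on (UNIV \<times> UNIV)"
  proof (rule summable_on_comparison_test)
    fix x :: "nat \<times> nat"
    obtain n m where x: "x = (n, m)" by (cases x)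
    show "0 \<le> f x" unfolding f_def x using ee_nonneg by (simp add: mult_nonneg_nonneg)
    show "f x \<le> (case x of (n,m) \<Rightarrow> ee r n / real n ^ 2 * (ee t m / real m ^ 2))"
    proof (cases "n = 0 \<or> m = 0")
      case True then show ?thesis unfolding f_def x using ee_nonneg by auto
    next
      case False
      then have n: "real n \<ge> 1" and m: "real m \<ge> 1" by auto
      have "real n ^ 2 \<le> real n ^ (k+2)" using n by (intro power_increasing) auto
      moreover have "real m ^ 2 \<le> real m * real (n+m)" using n m by (simp add: power2_eq_square)
      ultimately have le: "real n ^ 2 * real m ^ 2 \<le> real n ^ (k+2) * real m * real (n+m)"
        using n m by (metis mult.assoc mult_mono zero_le_power2 order_trans zero_le_one of_nat_0_le_iff)
      have "f x = ee r n * ee t m / (real n ^ (k+2) * real m * real (n+m))"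
        by (simp add: f_def x)
      also have "\<dots> \<le> ee r n * ee t m / (real n ^ 2 * real m ^ 2)"
        by (rule divide_left_mono[OF le]) (use n m in \<open>auto intro!: mult_nonneg_nonneg ee_nonneg\<close>)
      also have "\<dots> = (case x of (n,m) \<Rightarrow> ee r n / real n ^ 2 * (ee t m / real m ^ 2))"
        by (simp add: x)
      finally show ?thesis .
    qed
  qed
  define g where "g n = ee r n * hh (Suc t) n / real n ^ (k+3)" for n
  have fib: "((\<lambda>m. f (n, m)) has_sum g n) UNIV" for n
  proof (cases "n = 0")
    case True then show ?thesis by (simp add: f_def g_def)
  next
    case False
    have "(FF t n has_sum hh (Suc t) n / real n) UNIV" using False by (intro FF_has_sum) simp
    then have "((\<lambda>m. (ee r n / real n ^ (k+2)) * FF t n m) has_sum (ee r n / real n ^ (k+2)) * (hh (Suc t) n / real n)) UNIV"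
      by (rule has_sum_cmult_right)
    moreover have "(ee r n / real n ^ (k+2)) * FF t n m = f (n, m)" for m
      by (cases "m = 0") (auto simp: FF_def f_def add.commute)
    moreover have "(ee r n / real n ^ (k+2)) * (hh (Suc t) n / real n) = g n"
    proof -
      have "k + 3 = Suc (k + 2)" by simp
      then have e: "real n ^ (k+3) = real n ^ (k+2) * real n" by (simp only: power_Suc2)
      show ?thesis unfolding g_def e times_divide_times_eq ..
    qed
    ultimately show ?thesis by simp
  qed
  have "(f has_sum infsum f (UNIV \<times> UNIV)) (Sigma UNIV (\<lambda>_. UNIV))"
    using fs by (simp add: summable_iff_has_sum_infsum[symmetric])
  then have "(g has_sum infsum f (UNIV \<times> UNIV)) UNIV"
    by (rule has_sum_SigmaD) (rule fib)
  then have "((\<lambda>n. ee r n * hh (Suc t) n / real n ^ (k+3)) has_sum infsum f (UNIV \<times> UNIV)) UNIV"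
    unfolding g_def .
  then have "G (k+3) r (Suc t) = infsum f (UNIV \<times> UNIV)"
    by (rule G_eq[rotated]) simp
  then show ?thesis using fs unfolding f_def[symmetric]
    by (simp add: summable_iff_has_sum_infsum[symmetric])
qed

theorem proposition2p4:
  fixes p q k :: nat
  assumes "1 \<le> p" and "1 \<le> q"
  shows "G (k + 3) (p - 1) q + (-1) ^ k * G (k + 3) (q - 1) p =
    (\<Sum>a\<le>k. (-1) ^ (k - a) * mzv (replicate (p - 1) 1 @ [a + 2])
                              * mzv (replicate (q - 1) 1 @ [(k - a) + 2]))"
proof -
  obtain r where r: "p = Suc r" using assms(1) by (cases p) auto
  obtain t where t: "q = Suc t" using assms(2) by (cases q) auto
  define RHS where "RHS = (\<Sum>a\<le>k. (-1) ^ (k - a) * (Z r (a+2) * Z t (k - a + 2)))"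
  have R: "((\<lambda>x. \<Sum>a\<le>k. (-1) ^ (k - a) * (case x of (n,m) \<Rightarrow> ee r n / real n ^ (a+2) * (ee t m / real m ^ (k - a + 2))))
      has_sum RHS) (UNIV \<times> UNIV)"
    unfolding RHS_def
    apply (rule has_sum_sum_fun)
     apply simp
    apply (rule has_sum_cmult_right)
    apply (rule prod_hs)
    by auto
  have L1: "((\<lambda>(n,m). ee r n * ee t m / (real n ^ (k+2) * real m * real (n+m))) has_sum G (k+3) r (Suc t)) (UNIV \<times> UNIV)"
    by (rule L)
  have L2: "((\<lambda>(n,m). ee t m * ee r n / (real m ^ (k+2) * real n * real (m+n))) has_sum G (k+3) t (Suc r)) (UNIV \<times> UNIV)"
    using L[of t r k] by (subst (asm) has_sum_swap) (simp add: case_prod_unfold)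
  have S: "((\<lambda>x. (case x of (n,m) \<Rightarrow> ee r n * ee t m / (real n ^ (k+2) * real m * real (n+m)))
      + (-1) ^ k * (case x of (n,m) \<Rightarrow> ee t m * ee r n / (real m ^ (k+2) * real n * real (m+n))))
      has_sum G (k+3) r (Suc t) + (-1) ^ k * G (k+3) t (Suc r)) (UNIV \<times> UNIV)"
    by (intro has_sum_add L1 has_sum_cmult_right L2)
  have eqf: "(\<lambda>x. \<Sum>a\<le>k. (-1) ^ (k - a) * (case x of (n,m) \<Rightarrow> ee r n / real n ^ (a+2) * (ee t m / real m ^ (k - a + 2))))
      = (\<lambda>x. (case x of (n,m) \<Rightarrow> ee r n * ee t m / (real n ^ (k+2) * real m * real (n+m)))
      + (-1) ^ k * (case x of (n,m) \<Rightarrow> ee t m * ee r n / (real m ^ (k+2) * real n * real (m+n))))"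
  proof (rule ext)
    fix x :: "nat \<times> nat"
    obtain n m where x: "x = (n, m)" by (cases x)
    show "(\<Sum>a\<le>k. (-1) ^ (k - a) * (case x of (n,m) \<Rightarrow> ee r n / real n ^ (a+2) * (ee t m / real m ^ (k - a + 2))))
      = (case x of (n,m) \<Rightarrow> ee r n * ee t m / (real n ^ (k+2) * real m * real (n+m)))
      + (-1) ^ k * (case x of (n,m) \<Rightarrow> ee t m * ee r n / (real m ^ (k+2) * real n * real (m+n)))"
      unfolding x prod.case by (rule alg_pt)
  qed
  have "G (k+3) r (Suc t) + (-1) ^ k * G (k+3) t (Suc r) = RHS"
    by (rule has_sum_unique[OF S R[unfolded eqf]])
  moreover have "RHS = (\<Sum>a\<le>k. (-1) ^ (k - a) * mzv (replicate r 1 @ [a + 2])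
                              * mzv (replicate t 1 @ [(k - a) + 2]))"
    unfolding RHS_def
  proof (rule sum.cong[OF refl])
    fix a assume "a \<in> {..k}"
    have e1: "mzv (replicate r 1 @ [a + 2]) = Z r (a+2)" by (rule mzv_Z) simp
    have e2: "mzv (replicate t 1 @ [(k - a) + 2]) = Z t (k - a + 2)" by (rule mzv_Z) simp
    show "(-1) ^ (k - a) * (Z r (a+2) * Z t (k - a + 2)) =
      (-1) ^ (k - a) * mzv (replicate r 1 @ [a + 2]) * mzv (replicate t 1 @ [(k - a) + 2])"
      unfolding e1 e2 by (simp only: mult.assoc)
  qed
  ultimately show ?thesis unfolding r t by simp
qed

end
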